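(* Let $g\in\mathbb{Q}[x_1,\dots,x_n]$ be a monic polynomial, and let $g=\prod_{i=1}^m h_i$ be a factorization of $g$ over $\mathbb{Q}$ in which every $h_i\in\mathbb{Q}[x_1,\dots,x_n]$ is monic. Let $N>0$ be the least common multiple of the denominators of the coefficients of $g$. Then for every $i=1,\dots,m$, $N$ is an upper bound for the absolute values of the denominators of the coefficients of $h_i$.
   Context: A fixed monomial order on $\mathbb{Q}[x_1,\dots,x_n]$ is used; a polynomial is monic if its leading coefficient with respect to this order is $1$. Denominators of rational coefficients are taken with the fractions in lowest terms. *)

theory Defs
  imports Complex_Main "HOL-Library.Poly_Mapping"
begin

text \<open>Multivariate polynomials over Q: finitely supported maps from
monomials (exponent vectors, nat =>0 nat, variable i = x_(i+1)) to rational coefficients.\<close>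

type_synonym monom = "nat \<Rightarrow>\<^sub>0 nat"
type_synonym mpoly_q = "monom \<Rightarrow>\<^sub>0 rat"

definition monomial_order :: "(monom \<Rightarrow> monom \<Rightarrow> bool) \<Rightarrow> bool" where
  "monomial_order le \<longleftrightarrow>
     (\<forall>a. le a a) \<and>
     (\<forall>a b c. le a b \<longrightarrow> le b c \<longrightarrow> le a c) \<and>
     (\<forall>a b. le a b \<longrightarrow> le b a \<longrightarrow> a = b) \<and>
     (\<forall>a b. le a b \<or> le b a) \<and>
     wf {(a, b). le a b \<and> a \<noteq> b} \<and>
     (\<forall>a. le 0 a) \<and>
     (\<forall>a b c. le a b \<longrightarrow> le (a + c) (b + c))"

definition lead_monom :: "(monom \<Rightarrow> monom \<Rightarrow> bool) \<Rightarrow> mpoly_q \<Rightarrow> monom" where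
  "lead_monom le p = (THE m. m \<in> Poly_Mapping.keys p \<and> (\<forall>m' \<in> Poly_Mapping.keys p. le m' m))"

definition lead_coeff_mp :: "(monom \<Rightarrow> monom \<Rightarrow> bool) \<Rightarrow> mpoly_q \<Rightarrow> rat" where
  "lead_coeff_mp le p = Poly_Mapping.lookup p (lead_monom le p)"

definition monic_mp :: "(monom \<Rightarrow> monom \<Rightarrow> bool) \<Rightarrow> mpoly_q \<Rightarrow> bool" where
  "monic_mp le p \<longleftrightarrow> p \<noteq> 0 \<and> lead_coeff_mp le p = 1"

definition in_vars :: "nat \<Rightarrow> mpoly_q \<Rightarrow> bool" where
  "in_vars n p \<longleftrightarrow> (\<forall>m \<in> Poly_Mapping.keys p. Poly_Mapping.keys m \<subseteq> {..<n})"

definition denom :: "rat \<Rightarrow> int" where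
  "denom q = snd (quotient_of q)"

definition coeff_denom_lcm :: "mpoly_q \<Rightarrow> int" where
  "coeff_denom_lcm p = Lcm ((\<lambda>m. denom (Poly_Mapping.lookup p m)) ` Poly_Mapping.keys p)"

end

theory Submission imports Defs "HOL-Computational_Algebra.Primes" begin

definition pd :: "int \<Rightarrow> rat \<Rightarrow> bool" where "pd p x \<longleftrightarrow> x / of_int p \<in> \<int>"
definition intp :: "mpoly_q \<Rightarrow> bool" where "intp f \<longleftrightarrow> (\<forall>m. Poly_Mapping.lookup f m \<in> \<int>)"

lemma pd_int: assumes "p \<noteq> 0" shows "pd p (of_int a) \<longleftrightarrow> p dvd a"
proof
  assume "pd p (of_int a)"
  then obtain k where "of_int a / of_int p = (of_int k :: rat)" unfolding pd_def by (auto elim: Ints_cases)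
  then have "(of_int a :: rat) = of_int (p * k)" using assms by (simp add: field_simps)
  then have "a = p * k" by (simp only: of_int_eq_iff)
  then show "p dvd a" by simp
next
  assume "p dvd a" then obtain k where "a = p * k" by auto
  then show "pd p (of_int a)" using assms unfolding pd_def by simp
qed

lemma pd_zero: "pd p 0" by (simp add: pd_def)

lemma pd_mult: "pd p x \<Longrightarrow> y \<in> \<int> \<Longrightarrow> pd p (x * y)"
  unfolding pd_def by (metis Ints_mult times_divide_eq_left)

lemma pd_mult2: "pd p y \<Longrightarrow> x \<in> \<int> \<Longrightarrow> pd p (x * y)"
  using pd_mult[of p y x] by (simp add: mult.commute)

lemma pd_sum: "(\<And>x. x \<in> A \<Longrightarrow> pd p (h x)) \<Longrightarrow> pd p (sum h A)"
  unfolding pd_def by (simp add: sum_divide_distrib Ints_sum)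

lemma pd_diff: "pd p x \<Longrightarrow> pd p y \<Longrightarrow> pd p (x - y)"
  unfolding pd_def by (metis Ints_diff diff_divide_distrib)

lemma lookup_mult_fin:
  "Poly_Mapping.lookup (f * g) k = (\<Sum>a\<in>Poly_Mapping.keys f. \<Sum>b\<in>Poly_Mapping.keys g.
      (if k = a + b then Poly_Mapping.lookup f a * Poly_Mapping.lookup g b else (0::rat)))"
proof -
  have i: "(\<Sum>q. Poly_Mapping.lookup g q when k = l + q) = (\<Sum>b\<in>Poly_Mapping.keys g. if k = l + b then Poly_Mapping.lookup g b else 0)" for l
    by (subst Sum_any.expand_superset[of "Poly_Mapping.keys g"]) (auto simp: when_def in_keys_iff intro: sum.cong)
  have "Poly_Mapping.lookup (f * g) k = (\<Sum>l. Poly_Mapping.lookup f l * (\<Sum>b\<in>Poly_Mapping.keys g. if k = l + b then Poly_Mapping.lookup g b else 0))"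
    by (simp add: lookup_mult i)
  also have "\<dots> = (\<Sum>a\<in>Poly_Mapping.keys f. Poly_Mapping.lookup f a * (\<Sum>b\<in>Poly_Mapping.keys g. if k = a + b then Poly_Mapping.lookup g b else 0))"
    by (subst Sum_any.expand_superset[of "Poly_Mapping.keys f"]) (auto simp: in_keys_iff)
  finally show ?thesis by (auto simp: sum_distrib_left intro!: sum.cong)
qed

lemma lookup_const_mult: "Poly_Mapping.lookup (Poly_Mapping.single 0 c * f) m = c * Poly_Mapping.lookup (f::mpoly_q) m"
  by (simp add: mult_map_scale_conv_mult[symmetric] map.rep_eq when_def)

lemma intp_mult: "intp f \<Longrightarrow> intp g \<Longrightarrow> intp (f * g)"
  unfolding intp_def lookup_mult_fin by (auto intro!: Ints_sum Ints_mult)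

lemma mo_facts:
  assumes "monomial_order le"
  shows mo_refl: "le a a" and mo_trans: "le a b \<Longrightarrow> le b c \<Longrightarrow> le a c"
    and mo_antisym: "le a b \<Longrightarrow> le b a \<Longrightarrow> a = b" and mo_total: "le a b \<or> le b a"
    and mo_compat: "le a b \<Longrightarrow> le (a + c) (b + c)"
  using assms unfolding monomial_order_def by blast+

lemma ex_max:
  assumes mo: "monomial_order le" and "finite S" "S \<noteq> {}"
  shows "\<exists>x\<in>S. \<forall>y\<in>S. le y x"
  using assms(2,3)
proof (induction S rule: finite_ne_induct)
  case (singleton x) then show ?case using mo_refl[OF mo] by auto
next
  case (insert x F)
  then obtain m where m: "m \<in> F" "\<forall>y\<in>F. le y m" by auto
  show ?case
  proof (cases "le m x")
    case True then show ?thesis using m mo_refl[OF mo] mo_trans[OF mo] by blast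
  next
    case False then have "le x m" using mo_total[OF mo] by blast
    then show ?thesis using m mo_refl[OF mo] by blast
  qed
qed

lemma gauss:
  assumes mo: "monomial_order le" and fi: "intp f" and gi: "intp g" and pr: "prime p"
    and nf: "\<not>(\<forall>m. pd p (Poly_Mapping.lookup f m))"
    and ng: "\<not>(\<forall>m. pd p (Poly_Mapping.lookup g m))"
  shows "\<not>(\<forall>m. pd p (Poly_Mapping.lookup (f * g) m))"
proof
  assume all: "\<forall>m. pd p (Poly_Mapping.lookup (f * g) m)"
  have p0: "p \<noteq> 0" using pr by auto
  define Sf where "Sf = {m \<in> Poly_Mapping.keys f. \<not> pd p (Poly_Mapping.lookup f m)}"
  define Sg where "Sg = {m \<in> Poly_Mapping.keys g. \<not> pd p (Poly_Mapping.lookup g m)}"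
  have "Sf \<noteq> {}" using nf pd_zero unfolding Sf_def by (metis (mono_tags, lifting) empty_iff in_keys_iff mem_Collect_eq)
  moreover have "finite Sf" unfolding Sf_def by simp
  ultimately obtain mf where mf: "mf \<in> Sf" "\<forall>y\<in>Sf. le y mf" using ex_max[OF mo] by blast
  have "Sg \<noteq> {}" using ng pd_zero unfolding Sg_def by (metis (mono_tags, lifting) empty_iff in_keys_iff mem_Collect_eq)
  moreover have "finite Sg" unfolding Sg_def by simp
  ultimately obtain mg where mg: "mg \<in> Sg" "\<forall>y\<in>Sg. le y mg" using ex_max[OF mo] by blast
  define k where "k = mf + mg"
  define F where "F = (\<lambda>(a,b). if k = a + b then Poly_Mapping.lookup f a * Poly_Mapping.lookup g b else (0::rat))"
  define K where "K = Poly_Mapping.keys f \<times> Poly_Mapping.keys g"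
  have T: "Poly_Mapping.lookup (f * g) k = sum F K"
    unfolding lookup_mult_fin F_def K_def by (simp add: sum.cartesian_product)
  have inK: "(mf, mg) \<in> K" using mf mg unfolding K_def Sf_def Sg_def by auto
  have fin: "finite K" unfolding K_def by simp
  have split: "sum F K = F (mf, mg) + sum F (K - {(mf, mg)})"
    using sum.remove[OF fin inK] .
  have rest: "pd p (sum F (K - {(mf, mg)}))"
  proof (rule pd_sum)
    fix x assume x: "x \<in> K - {(mf, mg)}"
    obtain a b where ab: "x = (a, b)" by fastforce
    show "pd p (F x)"
    proof (cases "k = a + b")
      case False then show ?thesis using ab pd_zero unfolding F_def by simp
    next
      case kab: True
      have Fx: "F x = Poly_Mapping.lookup f a * Poly_Mapping.lookup g b" using ab kab unfolding F_def by simp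
      show ?thesis
      proof (cases "pd p (Poly_Mapping.lookup f a)")
        case True then show ?thesis using Fx pd_mult gi unfolding intp_def by simp
      next
        case nfa: False
        show ?thesis
        proof (cases "pd p (Poly_Mapping.lookup g b)")
          case True then show ?thesis using Fx pd_mult2 fi unfolding intp_def by simp
        next
          case ngb: False
          have "a \<in> Sf" using nfa x ab unfolding Sf_def K_def by auto
          then have la: "le a mf" using mf by auto
          have "b \<in> Sg" using ngb x ab unfolding Sg_def K_def by auto
          then have lb: "le b mg" using mg by auto
          have "a \<noteq> mf" using x ab kab unfolding k_def by auto
          have c1: "le (a + b) (mf + b)" using la mo_compat[OF mo] by blast
          have "le (b + mf) (mg + mf)" using lb mo_compat[OF mo] by blast
          then have c2: "le (mf + b) (a + b)" using kab unfolding k_def by (simp add: add.commute)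
          have "a + b = mf + b" using c1 c2 mo_antisym[OF mo] by blast
          then have "a = mf" by simp
          with \<open>a \<noteq> mf\<close> show ?thesis by simp
        qed
      qed
    qed
  qed
  have key: "pd p (F (mf, mg))"
    using pd_diff[OF all[rule_format, of k] rest] T split by simp
  obtain a where a: "Poly_Mapping.lookup f mf = of_int a" using fi unfolding intp_def by (meson Ints_cases)
  obtain b where b: "Poly_Mapping.lookup g mg = of_int b" using gi unfolding intp_def by (meson Ints_cases)
  have "\<not> p dvd a" using mf a pd_int[OF p0] unfolding Sf_def by auto
  moreover have "\<not> p dvd b" using mg b pd_int[OF p0] unfolding Sg_def by auto
  ultimately have "\<not> p dvd a * b" using pr prime_dvd_mult_iff by blast
  moreover have "F (mf, mg) = of_int (a * b)" unfolding F_def k_def using a b by simp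
  ultimately show False using key pd_int[OF p0, of "a * b"] by metis
qed


lemma denom_pos: "denom q > 0"
  unfolding denom_def by (rule quotient_of_denom_pos')

lemma denom_zero: "denom 0 = 1"
  unfolding denom_def by simp

lemma denom_dvd_Ints: assumes "denom q dvd K" shows "of_int K * q \<in> \<int>"
proof -
  obtain a b where qa: "quotient_of q = (a, b)" by fastforce
  have q: "q = of_int a / of_int b" using quotient_of_div[OF qa] .
  have "b dvd K" using assms qa unfolding denom_def by simp
  then obtain c where "K = b * c" by auto
  moreover have "b > 0" using quotient_of_denom_pos[OF qa] .
  ultimately have "of_int K * q = of_int (c * a)" using q by simp
  then show ?thesis by simp
qed

lemma Ints_denom_dvd: assumes "of_int K * q \<in> \<int>" shows "denom q dvd K"
proof -
  obtain a b where qa: "quotient_of q = (a, b)" by fastforce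
  have q: "q = of_int a / of_int b" using quotient_of_div[OF qa] .
  have b0: "b > 0" using quotient_of_denom_pos[OF qa] .
  have cop: "coprime a b" using quotient_of_coprime[OF qa] .
  obtain z where "of_int K * q = of_int z" using assms by (auto elim: Ints_cases)
  then have "of_int (K * a) = (of_int (z * b) :: rat)" using q b0 by (simp add: field_simps)
  then have "K * a = z * b" by (simp only: of_int_eq_iff)
  then have "b dvd K * a" by (metis dvd_triv_right)
  then have "b dvd K" using cop by (metis coprime_commute coprime_dvd_mult_left_iff)
  then show ?thesis using qa unfolding denom_def by simp
qed

lemma cdl_pos: "coeff_denom_lcm f > 0"
proof -
  let ?A = "(\<lambda>m. denom (Poly_Mapping.lookup f m)) ` Poly_Mapping.keys f"
  have "finite ?A" by simp
  moreover have "0 \<notin> ?A" using denom_pos by (metis (no_types, lifting) imageE less_irrefl)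
  ultimately have "Lcm ?A \<noteq> 0" using Lcm_0_iff by blast
  moreover have "Lcm ?A \<ge> 0" by simp
  ultimately show ?thesis unfolding coeff_denom_lcm_def by linarith
qed

lemma denom_dvd_cdl: "denom (Poly_Mapping.lookup f m) dvd coeff_denom_lcm f"
proof (cases "m \<in> Poly_Mapping.keys f")
  case True then show ?thesis unfolding coeff_denom_lcm_def by (simp add: dvd_Lcm)
next
  case False then show ?thesis by (simp add: in_keys_iff denom_zero)
qed

lemma cdl_least: assumes "\<And>m. m \<in> Poly_Mapping.keys f \<Longrightarrow> denom (Poly_Mapping.lookup f m) dvd K"
  shows "coeff_denom_lcm f dvd K"
  unfolding coeff_denom_lcm_def using assms by (auto intro!: Lcm_least)

definition cm :: "mpoly_q \<Rightarrow> mpoly_q" where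
  "cm f = Poly_Mapping.single 0 (of_int (coeff_denom_lcm f)) * f"

lemma monic_prim:
  assumes "monic_mp le f"
  shows "intp (cm f)" and "prime p \<Longrightarrow> \<not>(\<forall>m. pd p (Poly_Mapping.lookup (cm f) m))"
proof -
  let ?L = "coeff_denom_lcm f"
  have lk: "Poly_Mapping.lookup (cm f) m = of_int ?L * Poly_Mapping.lookup f m" for m
    unfolding cm_def lookup_const_mult ..
  show "intp (cm f)" unfolding intp_def lk using denom_dvd_Ints denom_dvd_cdl by blast
  assume pr: "prime p"
  show "\<not>(\<forall>m. pd p (Poly_Mapping.lookup (cm f) m))"
  proof
    assume all: "\<forall>m. pd p (Poly_Mapping.lookup (cm f) m)"
    have p0: "p \<noteq> 0" and p2: "p \<ge> 2" using pr by (auto simp: prime_ge_2_int)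
    obtain m0 where m0: "Poly_Mapping.lookup f m0 = 1"
      using assms unfolding monic_mp_def lead_coeff_mp_def by blast
    have "pd p (of_int ?L)" using all[rule_format, of m0] unfolding lk m0 by simp
    then have "p dvd ?L" using pd_int[OF p0] by simp
    then obtain K where K: "?L = p * K" by auto
    have L0: "?L > 0" by (rule cdl_pos)
    then have K0: "K > 0" using K p2 by (simp add: zero_less_mult_iff)
    have "denom (Poly_Mapping.lookup f m) dvd K" for m
    proof (rule Ints_denom_dvd)
      have "of_int ?L * Poly_Mapping.lookup f m / of_int p \<in> \<int>"
        using all[rule_format, of m] unfolding lk pd_def .
      then show "of_int K * Poly_Mapping.lookup f m \<in> \<int>" using K p0 by simp
    qed
    then have "?L dvd K" by (intro cdl_least)
    then have "?L \<le> K" using K0 by (rule zdvd_imp_le)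
    moreover have "?L \<ge> 2 * K" using K p2 K0 by simp
    ultimately show False using K0 by simp
  qed
qed

lemma prod_prim:
  assumes mo: "monomial_order le" and "\<forall>h\<in>set hs. monic_mp le h"
  shows "intp (prod_list (map cm hs)) \<and> (\<forall>p. prime p \<longrightarrow> \<not>(\<forall>m. pd p (Poly_Mapping.lookup (prod_list (map cm hs)) m)))"
  using assms(2)
proof (induction hs)
  case Nil
  have "intp 1" unfolding intp_def by (simp add: lookup_one when_def)
  moreover have "\<not>(\<forall>m. pd p (Poly_Mapping.lookup 1 m))" if "prime p" for p
  proof -
    have "\<not> pd p (of_int 1)" using pd_int[of p 1] that by auto
    then show ?thesis by (metis lookup_one_zero of_int_1)
  qed
  ultimately show ?case by (simp only: list.map prod_list.Nil) blast
next
  case (Cons h hs)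
  then have ih: "intp (prod_list (map cm hs))" "\<And>p. prime p \<Longrightarrow> \<not>(\<forall>m. pd p (Poly_Mapping.lookup (prod_list (map cm hs)) m))"
    and mh: "monic_mp le h" by auto
  show ?case using intp_mult[OF monic_prim(1)[OF mh] ih(1)] gauss[OF mo monic_prim(1)[OF mh] ih(1) _ monic_prim(2)[OF mh] ih(2)]
    by simp
qed

lemma prod_cm: "prod_list (map cm hs) = Poly_Mapping.single 0 (of_int (prod_list (map coeff_denom_lcm hs))) * prod_list hs"
proof (induction hs)
  case Nil then show ?case by simp
next
  case (Cons h hs)
  define a where "a = (of_int (coeff_denom_lcm h) :: rat)"
  define b where "b = (of_int (prod_list (map coeff_denom_lcm hs)) :: rat)"
  have "prod_list (map cm (h # hs)) = cm h * prod_list (map cm hs)" by simp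
  also have "\<dots> = (Poly_Mapping.single 0 a * h) * (Poly_Mapping.single 0 b * prod_list hs)"
    using Cons unfolding cm_def a_def b_def by (simp only:)
  also have "\<dots> = (Poly_Mapping.single 0 a * Poly_Mapping.single 0 b) * (h * prod_list hs)"
    by (simp only: mult_ac)
  also have "\<dots> = Poly_Mapping.single 0 (a * b) * (h * prod_list hs)"
    by (simp only: mult_single add_0)
  also have "a * b = of_int (prod_list (map coeff_denom_lcm (h # hs)))"
    unfolding a_def b_def by simp
  finally show ?case by (simp only: prod_list.Cons list.map)
qed

lemma prod_pos: "prod_list (map coeff_denom_lcm hs) > 0"
  by (induction hs) (auto simp: cdl_pos)

lemma prod_dvd: "h \<in> set hs \<Longrightarrow> coeff_denom_lcm h dvd prod_list (map coeff_denom_lcm hs)"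
  by (induction hs) auto

theorem theorem6:
  fixes le :: "monom \<Rightarrow> monom \<Rightarrow> bool" and n :: nat
    and g :: mpoly_q and hs :: "mpoly_q list" and N :: int
  assumes "monomial_order le"
    and "in_vars n g"
    and "monic_mp le g"
    and "\<forall>h \<in> set hs. in_vars n h \<and> monic_mp le h"
    and "g = prod_list hs"
    and "N = coeff_denom_lcm g"
  shows "\<forall>i < length hs. \<forall>m. \<bar>denom (Poly_Mapping.lookup (hs ! i) m)\<bar> \<le> N"
proof -
  define P where "P = prod_list (map coeff_denom_lcm hs)"
  have mon: "\<forall>h\<in>set hs. monic_mp le h" using assms(4) by blast
  have pp: "intp (prod_list (map cm hs))" "\<And>p. prime p \<Longrightarrow> \<not>(\<forall>m. pd p (Poly_Mapping.lookup (prod_list (map cm hs)) m))"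
    using prod_prim[OF assms(1) mon] by auto
  have lk: "Poly_Mapping.lookup (prod_list (map cm hs)) m = of_int P * Poly_Mapping.lookup g m" for m
    unfolding prod_cm lookup_const_mult P_def assms(5) ..
  have P0: "P > 0" unfolding P_def by (rule prod_pos)
  have N0: "N > 0" using assms(6) cdl_pos by simp
  have "N dvd P" unfolding assms(6)
    by (rule cdl_least, rule Ints_denom_dvd) (use pp(1) lk in \<open>auto simp: intp_def\<close>)
  then obtain k where k: "P = N * k" by auto
  have k0: "k > 0" using k P0 N0 by (simp add: zero_less_mult_iff)
  have "k = 1"
  proof (rule ccontr)
    assume "k \<noteq> 1"
    then have "\<not> is_unit k" using k0 by auto
    then obtain q where q: "q dvd k" "prime q" using prime_divisor_exists[of k] k0 by auto
    then obtain j where j: "k = q * j" by auto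
    have q0: "q \<noteq> 0" using q by auto
    have "pd q (Poly_Mapping.lookup (prod_list (map cm hs)) m)" for m
    proof -
      have "of_int N * Poly_Mapping.lookup g m \<in> \<int>" using denom_dvd_Ints denom_dvd_cdl assms(6) by blast
      then have "of_int j * (of_int N * Poly_Mapping.lookup g m) \<in> \<int>" by simp
      moreover have "of_int P * Poly_Mapping.lookup g m / of_int q = of_int j * (of_int N * Poly_Mapping.lookup g m)"
        using k j q0 by simp
      ultimately show ?thesis unfolding lk pd_def by simp
    qed
    then show False using pp(2)[OF q(2)] by blast
  qed
  then have PN: "P = N" using k by simp
  show ?thesis
  proof (intro allI impI)
    fix i m assume "i < length hs"
    then have "hs ! i \<in> set hs" by simp
    then have "denom (Poly_Mapping.lookup (hs ! i) m) dvd N"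
      using prod_dvd denom_dvd_cdl PN unfolding P_def by (metis dvd_trans)
    then have "denom (Poly_Mapping.lookup (hs ! i) m) \<le> N" using N0 by (rule zdvd_imp_le)
    then show "\<bar>denom (Poly_Mapping.lookup (hs ! i) m)\<bar> \<le> N" using denom_pos[of "Poly_Mapping.lookup (hs ! i) m"] by linarith
  qed
qed

end
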